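(* For a single-cell region ($n_x=n_y=n_z=1$) formed by the primary cell with corners $(i,j,k)$ and $(i+1,j+1,k+1)$, carrying potential values $U_{i+a,j+b,k+c}$, $a,b,c\in\{0,1\}$, at its eight nodes, let $$\Delta t^{(i,j,k)}_{\mathrm{CFL}}=\frac{2}{\frac{2\hbar}{m}\left(\frac{1}{(\Delta x)^2}+\frac{1}{(\Delta y)^2}+\frac{1}{(\Delta z)^2}\right)+\frac{1}{\hbar}\max_{a,b,c\in\{0,1\}}|U_{i+a,j+b,k+c}|}$$ and let $\Delta t^{(i,j,k)}_{\mathrm{CFL,gen}}$ be the generalized CFL limit of this single-cell region. Then $\Delta t^{(i,j,k)}_{\mathrm{CFL}}\le\Delta t^{(i,j,k)}_{\mathrm{CFL,gen}}$.
   Context: Fix constants $\hbar>0$, $m>0$, cell sizes $\Delta x,\Delta y,\Delta z>0$. For a single-cell region (one primary cell of size $\Delta x\times\Delta y\times\Delta z$, local nodes $(a+1,b+1,c+1)$, $a,b,c\in\{0,1\}$, ordered by $(a+1)+2b+4c$), let $D_U$ be the $8\times8$ diagonal matrix of the node potentials. Let $I_p$ be the $p\times p$ identity, $W_1=[-1\ \ 1]$, $\otimes$ the Kronecker product. Define $D_V''=\frac{\Delta x\Delta y\Delta z}{8}I_8$; $D=-[I_2\otimes I_2\otimes W_1^T\ \ I_2\otimes W_1^T\otimes I_2\ \ W_1^T\otimes I_2\otimes I_2]$; $D_S''=\mathrm{diag}(\frac{\Delta y\Delta z}{4}I_4,\frac{\Delta x\Delta z}{4}I_4,\frac{\Delta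 x\Delta y}{4}I_4)$; $D_l'=\mathrm{diag}(\Delta x I_4,\Delta y I_4,\Delta z I_4)$; $H=\frac{\hbar^2}{2m}D D_S''(D_l')^{-1}D^T+D_V''D_U$. The generalized CFL limit is $\Delta t_{\mathrm{CFL,gen}}=2/\rho\!\left(\frac{1}{\hbar}(D_V'')^{-1/2}H(D_V'')^{-1/2}\right)$, with $\rho$ the spectral radius. *)

theory Defs
  imports "Jordan_Normal_Form.Spectral_Radius" "Jordan_Normal_Form.Gauss_Jordan_Elimination"
begin

definition kron :: "real mat \<Rightarrow> real mat \<Rightarrow> real mat" where
  "kron A B = mat (dim_row A * dim_row B) (dim_col A * dim_col B)
     (\<lambda>(i,j). A $$ (i div dim_row B, j div dim_col B) * B $$ (i mod dim_row B, j mod dim_col B))"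

definition hcat :: "real mat \<Rightarrow> real mat \<Rightarrow> real mat" where
  "hcat A B = mat (dim_row A) (dim_col A + dim_col B)
     (\<lambda>(i,j). if j < dim_col A then A $$ (i,j) else B $$ (i, j - dim_col A))"

definition bdiag :: "real mat \<Rightarrow> real mat \<Rightarrow> real mat" where
  "bdiag A B = four_block_mat A (0\<^sub>m (dim_row A) (dim_col B)) (0\<^sub>m (dim_row B) (dim_col A)) B"

definition W1 :: "real mat" where
  "W1 = mat 1 2 (\<lambda>(i,j). if j = 0 then -1 else 1)"

definition Dmat :: "real mat" where
  "Dmat = - hcat (kron (1\<^sub>m 2) (kron (1\<^sub>m 2) (transpose_mat W1)))
            (hcat (kron (1\<^sub>m 2) (kron (transpose_mat W1) (1\<^sub>m 2)))
                  (kron (transpose_mat W1) (kron (1\<^sub>m 2) (1\<^sub>m 2))))"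

definition DV :: "real \<Rightarrow> real \<Rightarrow> real \<Rightarrow> real mat" where
  "DV dx dy dz = (dx * dy * dz / 8) \<cdot>\<^sub>m 1\<^sub>m 8"

definition DV_inv_sqrt :: "real \<Rightarrow> real \<Rightarrow> real \<Rightarrow> real mat" where
  "DV_inv_sqrt dx dy dz = (1 / sqrt (dx * dy * dz / 8)) \<cdot>\<^sub>m 1\<^sub>m 8"

definition DS :: "real \<Rightarrow> real \<Rightarrow> real \<Rightarrow> real mat" where
  "DS dx dy dz = bdiag ((dy * dz / 4) \<cdot>\<^sub>m 1\<^sub>m 4)
                   (bdiag ((dx * dz / 4) \<cdot>\<^sub>m 1\<^sub>m 4) ((dx * dy / 4) \<cdot>\<^sub>m 1\<^sub>m 4))"

definition Dl :: "real \<Rightarrow> real \<Rightarrow> real \<Rightarrow> real mat" where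
  "Dl dx dy dz = bdiag (dx \<cdot>\<^sub>m 1\<^sub>m 4) (bdiag (dy \<cdot>\<^sub>m 1\<^sub>m 4) (dz \<cdot>\<^sub>m 1\<^sub>m 4))"

text \<open>Node potentials: U a b c is the potential at local node (a+1,b+1,c+1), i.e. U_{i+a,j+b,k+c};
  the node with (0-based) index a + 2b + 4c is placed at diagonal position a + 2b + 4c.\<close>
definition DU :: "(nat \<Rightarrow> nat \<Rightarrow> nat \<Rightarrow> real) \<Rightarrow> real mat" where
  "DU U = mat 8 8 (\<lambda>(p,q). if p = q then U (p mod 2) ((p div 2) mod 2) (p div 4) else 0)"

definition Hmat :: "real \<Rightarrow> real \<Rightarrow> real \<Rightarrow> real \<Rightarrow> real \<Rightarrow> (nat \<Rightarrow> nat \<Rightarrow> nat \<Rightarrow> real) \<Rightarrow> real mat" where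
  "Hmat hbar m dx dy dz U =
     (hbar^2 / (2*m)) \<cdot>\<^sub>m (Dmat * DS dx dy dz * the (mat_inverse (Dl dx dy dz)) * transpose_mat Dmat)
     + DV dx dy dz * DU U"

definition dt_cfl_gen :: "real \<Rightarrow> real \<Rightarrow> real \<Rightarrow> real \<Rightarrow> real \<Rightarrow> (nat \<Rightarrow> nat \<Rightarrow> nat \<Rightarrow> real) \<Rightarrow> real" where
  "dt_cfl_gen hbar m dx dy dz U =
     2 / spectral_radius (map_mat complex_of_real
           ((1 / hbar) \<cdot>\<^sub>m (DV_inv_sqrt dx dy dz * Hmat hbar m dx dy dz U * DV_inv_sqrt dx dy dz)))"

definition dt_cfl :: "real \<Rightarrow> real \<Rightarrow> real \<Rightarrow> real \<Rightarrow> real \<Rightarrow> (nat \<Rightarrow> nat \<Rightarrow> nat \<Rightarrow> real) \<Rightarrow> real" where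
  "dt_cfl hbar m dx dy dz U =
     2 / ((2 * hbar / m) * (1 / dx^2 + 1 / dy^2 + 1 / dz^2)
          + (1 / hbar) * Max {\<bar>U a b c\<bar> | a b c. a \<in> {0,1} \<and> b \<in> {0,1} \<and> c \<in> {0,1}})"

end

theory Submission
  imports Defs
begin


definition Df :: "nat \<Rightarrow> nat \<Rightarrow> real" where
 "Df p e = (if e < 4 then (if p div 2 = e then (if p mod 2 = 0 then 1 else -1) else 0)
    else if e < 8 then (if p div 4 = (e-4) div 2 \<and> p mod 2 = (e-4) mod 2 then (if (p div 2) mod 2 = 0 then 1 else -1) else 0)
    else (if p mod 4 = e - 8 then (if p div 4 = 0 then 1 else -1) else 0))"

lemma less8: "(i::nat) < 8 \<longleftrightarrow> i \<in> {0,1,2,3,4,5,6,7}" by (auto simp: eval_nat_numeral less_Suc_eq)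
lemma less12: "(i::nat) < 12 \<longleftrightarrow> i \<in> {0,1,2,3,4,5,6,7,8,9,10,11}" by (auto simp: eval_nat_numeral less_Suc_eq)

lemma sum8: "sum f {0..<(8::nat)} = f 0 + f 1 + f 2 + f 3 + f 4 + f 5 + f 6 + (f 7 :: real)"
  by (simp add: eval_nat_numeral atLeast0_lessThan_Suc algebra_simps)
lemma sum12: "sum f {0..<(12::nat)} = f 0 + f 1 + f 2 + f 3 + f 4 + f 5 + f 6 + f 7 + f 8 + f 9 + f 10 + (f 11 :: real)"
  by (simp add: eval_nat_numeral atLeast0_lessThan_Suc algebra_simps)

lemma Dmat_eq: "Dmat = mat 8 12 (\<lambda>(p,e). Df p e)"
proof (rule eq_matI)
  show "dim_row Dmat = dim_row (mat 8 12 (\<lambda>(p,e). Df p e))"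
    by (simp add: Dmat_def hcat_def kron_def W1_def)
  show "dim_col Dmat = dim_col (mat 8 12 (\<lambda>(p,e). Df p e))"
    by (simp add: Dmat_def hcat_def kron_def W1_def)
  fix i j assume "i < dim_row (mat 8 12 (\<lambda>(p,e). Df p e))" "j < dim_col (mat 8 12 (\<lambda>(p,e). Df p e))"
  hence "i < 8" "j < 12" by auto
  thus "Dmat $$ (i,j) = mat 8 12 (\<lambda>(p,e). Df p e) $$ (i,j)"
    unfolding less8 less12
    by (auto simp: Dmat_def hcat_def kron_def W1_def Df_def)
qed

lemma eq_mat_enum: assumes "dim_row A = n" "dim_col A = m" "\<And>i j. i<n \<Longrightarrow> j<m \<Longrightarrow> A$$(i,j) = f i j"
  shows "A = mat n m (\<lambda>(i,j). f i j)"
  using assms by (auto intro!: eq_matI)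

lemma DS_eq: "DS dx dy dz = mat 12 12 (\<lambda>(i,j). if i = j then (if i < 4 then dy * dz / 4 else if i < 8 then dx * dz / 4 else dx * dy / 4) else 0)"
proof (rule eq_mat_enum)
  fix i j :: nat assume "i < 12" "j < 12"
  thus "DS dx dy dz $$ (i,j) = (if i = j then (if i < 4 then dy * dz / 4 else if i < 8 then dx * dz / 4 else dx * dy / 4) else 0)"
    unfolding DS_def bdiag_def
    by (auto simp: index_mat_four_block)
qed (auto simp: DS_def bdiag_def)

definition dg :: "nat \<Rightarrow> (nat \<Rightarrow> real) \<Rightarrow> real mat" where
  "dg n f = mat n n (\<lambda>(i,j). if i = j then f i else 0)"

lemma Dl_eq: "Dl dx dy dz = dg 12 (\<lambda>i. if i < 4 then dx else if i < 8 then dy else dz)"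
  unfolding dg_def
proof (rule eq_mat_enum)
  fix i j :: nat assume "i < 12" "j < 12"
  thus "Dl dx dy dz $$ (i,j) = (if i = j then (if i < 4 then dx else if i < 8 then dy else dz) else 0)"
    unfolding Dl_def bdiag_def
    by (auto simp: index_mat_four_block)
qed (auto simp: Dl_def bdiag_def)

lemma dg_carrier[simp]: "dg n f \<in> carrier_mat n n" by (simp add: dg_def)

lemma mult_dg_right: assumes "A \<in> carrier_mat m n"
  shows "A * dg n f = mat m n (\<lambda>(i,j). A $$ (i,j) * f j)"
proof (rule eq_mat_enum)
  fix i j assume "i < m" "j < n"
  have "(A * dg n f) $$ (i,j) = (\<Sum>k\<in>{0..<n}. A $$ (i,k) * (if k = j then f k else 0))"
    using assms \<open>i < m\<close> \<open>j < n\<close> by (simp add: dg_def scalar_prod_def)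
  also have "\<dots> = A $$ (i,j) * f j"
    using \<open>j < n\<close> by (simp add: if_distrib cong: if_cong)
  finally show "(A * dg n f) $$ (i,j) = A $$ (i,j) * f j" .
qed (use assms in \<open>auto simp: dg_def\<close>)

lemma dg_mult_dg: "dg n f * dg n g = dg n (\<lambda>i. f i * g i)"
  by (subst mult_dg_right) (auto simp: dg_def intro!: eq_matI)


lemma dg_inverse: assumes "\<And>i. i < n \<Longrightarrow> f i \<noteq> 0"
  shows "the (mat_inverse (dg n f)) = dg n (\<lambda>i. 1 / f i)"
proof -
  have one: "dg n f * dg n (\<lambda>i. 1 / f i) = 1\<^sub>m n" "dg n (\<lambda>i. 1 / f i) * dg n f = 1\<^sub>m n"
    unfolding dg_mult_dg by (rule eq_matI, use assms in \<open>auto simp: dg_def\<close>)+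
  have c: "dg n f \<in> carrier (ring_mat TYPE(real) n undefined)" "dg n (\<lambda>i. 1 / f i) \<in> carrier (ring_mat TYPE(real) n undefined)"
    by (simp_all add: ring_mat_def)
  have u: "dg n f \<in> Units (ring_mat TYPE(real) n undefined)"
  proof -
    have "dg n (\<lambda>i. 1 / f i) \<otimes>\<^bsub>ring_mat TYPE(real) n undefined\<^esub> dg n f = \<one>\<^bsub>ring_mat TYPE(real) n undefined\<^esub>"
      "dg n f \<otimes>\<^bsub>ring_mat TYPE(real) n undefined\<^esub> dg n (\<lambda>i. 1 / f i) = \<one>\<^bsub>ring_mat TYPE(real) n undefined\<^esub>"
      using one unfolding ring_mat_def by simp_all
    with c show ?thesis unfolding Units_def by blast
  qed
  hence "mat_inverse (dg n f) \<noteq> None" using mat_inverse(1)[OF dg_carrier[of n f]] by metis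
  then obtain B where B: "mat_inverse (dg n f) = Some B" by auto
  from mat_inverse(2)[OF dg_carrier B] have AB: "dg n f * B = 1\<^sub>m n" and Bc: "B \<in> carrier_mat n n" by auto
  have "dg n (\<lambda>i. 1 / f i) = dg n (\<lambda>i. 1 / f i) * (dg n f * B)" using AB Bc by (simp add: right_mult_one_mat[OF dg_carrier])
  also have "\<dots> = (dg n (\<lambda>i. 1 / f i) * dg n f) * B"
    by (rule assoc_mult_mat[symmetric, OF dg_carrier dg_carrier Bc])
  also have "\<dots> = B" using one Bc by simp
  finally show ?thesis using B by simp
qed


definition nbx :: "nat \<Rightarrow> nat" where "nbx p = (if p mod 2 = 0 then p + 1 else p - 1)"
definition nby :: "nat \<Rightarrow> nat" where "nby p = (if (p div 2) mod 2 = 0 then p + 2 else p - 2)"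
definition nbz :: "nat \<Rightarrow> nat" where "nbz p = (if p < 4 then p + 4 else p - 4)"

definition Lf :: "real \<Rightarrow> real \<Rightarrow> real \<Rightarrow> nat \<Rightarrow> nat \<Rightarrow> real" where
  "Lf wx wy wz p q = (if p = q then wx + wy + wz else if q = nbx p then - wx
     else if q = nby p then - wy else if q = nbz p then - wz else 0)"

lemma Df_sum: assumes "p < 8" "q < 8"
  shows "(\<Sum>e\<in>{0..<12}. Df p e * (if e < 4 then a else if e < 8 then b else c) * Df q e) = Lf a b c p q"
  using assms unfolding less8 sum12
  by (elim insertE emptyE; simp add: Df_def Lf_def nbx_def nby_def nbz_def)


lemma L_eq: "Dmat * DS dx dy dz * dg 12 (\<lambda>i. 1 / (if i < 4 then dx else if i < 8 then dy else dz)) * transpose_mat Dmat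
  = mat 8 8 (\<lambda>(p,q). Lf (dy * dz / 4 / dx) (dx * dz / 4 / dy) (dx * dy / 4 / dz) p q)"
proof -
  have DS: "DS dx dy dz = dg 12 (\<lambda>i. if i < 4 then dy * dz / 4 else if i < 8 then dx * dz / 4 else dx * dy / 4)"
    unfolding DS_eq dg_def by simp
  have Dc: "mat 8 12 (\<lambda>(p,e). Df p e) \<in> carrier_mat 8 12" by simp
  have 1: "Dmat * DS dx dy dz * dg 12 (\<lambda>i. 1 / (if i < 4 then dx else if i < 8 then dy else dz))
    = mat 8 12 (\<lambda>(p,e). Df p e * (if e < 4 then dy * dz / 4 / dx else if e < 8 then dx * dz / 4 / dy else dx * dy / 4 / dz))"
    unfolding Dmat_eq DS
    by (subst mult_dg_right[OF Dc], subst mult_dg_right, auto intro!: eq_matI)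
  show ?thesis unfolding 1
  proof (rule eq_mat_enum)
    fix p q :: nat assume pq: "p < 8" "q < 8"
    have "(mat 8 12 (\<lambda>(p,e). Df p e * (if e < 4 then dy * dz / 4 / dx else if e < 8 then dx * dz / 4 / dy else dx * dy / 4 / dz)) * transpose_mat Dmat) $$ (p,q)
      = (\<Sum>e\<in>{0..<12}. Df p e * (if e < 4 then dy * dz / 4 / dx else if e < 8 then dx * dz / 4 / dy else dx * dy / 4 / dz) * Df q e)"
      using pq by (simp add: Dmat_eq scalar_prod_def)
    also have "\<dots> = Lf (dy * dz / 4 / dx) (dx * dz / 4 / dy) (dx * dy / 4 / dz) p q"
      by (rule Df_sum[OF pq])
    finally show "(mat 8 12 (\<lambda>(p,e). Df p e * (if e < 4 then dy * dz / 4 / dx else if e < 8 then dx * dz / 4 / dy else dx * dy / 4 / dz)) * transpose_mat Dmat) $$ (p,q)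
      = Lf (dy * dz / 4 / dx) (dx * dz / 4 / dy) (dx * dy / 4 / dz) p q" .
  qed (auto simp: Dmat_eq)
qed


lemma Lf_scale: "k * Lf a b c p q = Lf (k*a) (k*b) (k*c) p q"
  by (simp add: Lf_def algebra_simps)

definition Uf :: "(nat \<Rightarrow> nat \<Rightarrow> nat \<Rightarrow> real) \<Rightarrow> nat \<Rightarrow> real" where
  "Uf U p = U (p mod 2) ((p div 2) mod 2) (p div 4)"

definition Ar :: "real \<Rightarrow> real \<Rightarrow> real \<Rightarrow> real \<Rightarrow> real \<Rightarrow> (nat \<Rightarrow> nat \<Rightarrow> nat \<Rightarrow> real) \<Rightarrow> real mat" where
  "Ar hbar m dx dy dz U = (1 / hbar) \<cdot>\<^sub>m (DV_inv_sqrt dx dy dz * Hmat hbar m dx dy dz U * DV_inv_sqrt dx dy dz)"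

lemma Ar_eq: assumes "hbar > 0" "m > 0" "dx > 0" "dy > 0" "dz > 0"
  shows "Ar hbar m dx dy dz U = mat 8 8 (\<lambda>(p,q). Lf (hbar/(m*dx^2)) (hbar/(m*dy^2)) (hbar/(m*dz^2)) p q
     + (if p = q then Uf U p / hbar else 0))"
proof -
  let ?s = "1 / sqrt (dx * dy * dz / 8)"
  let ?L = "mat 8 8 (\<lambda>(p,q). Lf (dy * dz / 4 / dx) (dx * dz / 4 / dy) (dx * dy / 4 / dz) p q)"
  have inv: "the (mat_inverse (Dl dx dy dz)) = dg 12 (\<lambda>i. 1 / (if i < 4 then dx else if i < 8 then dy else dz))"
    unfolding Dl_eq using assms by (intro dg_inverse) auto
  have DUc: "DU U \<in> carrier_mat 8 8" by (simp add: DU_def)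
  have H: "Hmat hbar m dx dy dz U = (hbar^2 / (2*m)) \<cdot>\<^sub>m ?L + (dx * dy * dz / 8) \<cdot>\<^sub>m DU U"
    unfolding Hmat_def inv L_eq DV_def
    by (subst mult_smult_assoc_mat[OF one_carrier_mat DUc], simp add: left_mult_one_mat[OF DUc])
  have Hc: "Hmat hbar m dx dy dz U \<in> carrier_mat 8 8" unfolding H using DUc by simp
  have P: "DV_inv_sqrt dx dy dz * Hmat hbar m dx dy dz U * DV_inv_sqrt dx dy dz = ?s \<cdot>\<^sub>m (?s \<cdot>\<^sub>m Hmat hbar m dx dy dz U)"
    unfolding DV_inv_sqrt_def
    apply (subst mult_smult_assoc_mat[OF one_carrier_mat Hc])
    apply (subst left_mult_one_mat[OF Hc])
    apply (subst mult_smult_distrib[of _ 8 8 _ 8])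
      apply (simp add: Hc)
     apply simp
    apply (subst mult_smult_assoc_mat[OF Hc one_carrier_mat])
    apply (subst right_mult_one_mat[OF Hc])
    apply (rule refl)
    done
  have ss: "?s * ?s = 8 / (dx * dy * dz)" using assms
    by (simp add: field_simps)
  show ?thesis unfolding Ar_def P
  proof (rule eq_mat_enum)
    fix p q :: nat assume pq: "p < 8" "q < 8"
    have "((1 / hbar) \<cdot>\<^sub>m (?s \<cdot>\<^sub>m (?s \<cdot>\<^sub>m Hmat hbar m dx dy dz U))) $$ (p,q)
       = (1/hbar) * (?s * ?s) * ((hbar^2 / (2*m)) * Lf (dy * dz / 4 / dx) (dx * dz / 4 / dy) (dx * dy / 4 / dz) p q
          + (dx * dy * dz / 8) * (if p = q then Uf U p else 0))"
      using pq Hc unfolding H by (simp add: DU_def Uf_def)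
    also have "\<dots> = Lf (hbar/(m*dx^2)) (hbar/(m*dy^2)) (hbar/(m*dz^2)) p q + (if p = q then Uf U p / hbar else 0)"
      unfolding ss distrib_left mult.assoc[symmetric] Lf_scale
      using assms by (auto simp: field_simps power2_eq_square)
    finally show "((1 / hbar) \<cdot>\<^sub>m (?s \<cdot>\<^sub>m (?s \<cdot>\<^sub>m Hmat hbar m dx dy dz U))) $$ (p,q) =
      Lf (hbar/(m*dx^2)) (hbar/(m*dy^2)) (hbar/(m*dz^2)) p q + (if p = q then Uf U p / hbar else 0)" .
  qed (use Hc in auto)
qed



lemma gersh: fixes A :: "complex mat"
  assumes A: "A \<in> carrier_mat n n" and ev: "eigenvalue A l"
    and rows: "\<And>i. i < n \<Longrightarrow> (\<Sum>j\<in>{0..<n}. norm (A $$ (i,j))) \<le> R"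
  shows "norm l \<le> R"
proof -
  from ev obtain v where v: "v \<in> carrier_vec n" "v \<noteq> 0\<^sub>v n" "A *\<^sub>v v = l \<cdot>\<^sub>v v"
    unfolding eigenvalue_def eigenvector_def using A by auto
  have n: "n > 0" using v by (metis eq_vecI carrier_vecD gr_zeroI index_zero_vec(2) less_nat_zero_code)
  define M where "M = Max ((\<lambda>j. norm (v $ j)) ` {0..<n})"
  have "M \<in> (\<lambda>j. norm (v $ j)) ` {0..<n}" unfolding M_def using n by (intro Max_in) auto
  then obtain i where i: "i < n" "norm (v $ i) = M" by auto
  have le: "norm (v $ j) \<le> norm (v $ i)" if "j < n" for j
    unfolding i M_def using that by (intro Max_ge) auto
  have pos: "norm (v $ i) > 0"
  proof (rule ccontr)
    assume "\<not> norm (v $ i) > 0"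
    hence "\<And>j. j < n \<Longrightarrow> v $ j = 0" using le by (metis norm_le_zero_iff not_less order.trans)
    hence "v = 0\<^sub>v n" using v(1) by (intro eq_vecI) auto
    with v(2) show False by simp
  qed
  have "l * v $ i = (A *\<^sub>v v) $ i" using v(1) v(3) i by simp
  also have "\<dots> = (\<Sum>j\<in>{0..<n}. A $$ (i,j) * v $ j)"
    using A v(1) i by (simp add: scalar_prod_def)
  finally have eq: "l * v $ i = (\<Sum>j\<in>{0..<n}. A $$ (i,j) * v $ j)" .
  have "norm l * norm (v $ i) = norm (\<Sum>j\<in>{0..<n}. A $$ (i,j) * v $ j)"
    by (simp add: eq[symmetric] norm_mult)
  also have "\<dots> \<le> (\<Sum>j\<in>{0..<n}. norm (A $$ (i,j)) * norm (v $ j))"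
    by (rule order.trans[OF norm_sum]) (simp add: norm_mult)
  also have "\<dots> \<le> (\<Sum>j\<in>{0..<n}. norm (A $$ (i,j)) * norm (v $ i))"
    by (intro sum_mono mult_left_mono le) auto
  also have "\<dots> = (\<Sum>j\<in>{0..<n}. norm (A $$ (i,j))) * norm (v $ i)"
    by (simp add: sum_distrib_right)
  also have "\<dots> \<le> R * norm (v $ i)"
    by (intro mult_right_mono rows i) simp
  finally show ?thesis using pos by simp
qed



lemma spec_zero_nilpotent: fixes A :: "complex mat"
  assumes A: "A \<in> carrier_mat n n" and ev0: "\<And>l. eigenvalue A l \<Longrightarrow> l = 0"
  shows "A ^\<^sub>m n = 0\<^sub>m n n"
proof -
  from char_poly_factorized[OF A] obtain as where cp: "char_poly A = (\<Prod>a\<leftarrow>as. [:- a, 1:])" by auto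
  from jordan_nf_exists[OF A cp] obtain n_as where jnf: "jordan_nf A n_as" by auto
  from jordan_nf_powE[OF A jnf] obtain P Q where PQ: "P \<in> carrier_mat n n" "Q \<in> carrier_mat n n"
    and cp2: "char_poly A = (\<Prod>(na, a)\<leftarrow>n_as. [:- a, 1:] ^ na)"
    and pw: "\<And>k. A ^\<^sub>m k = P * (jordan_matrix n_as) ^\<^sub>m k * Q" by blast
  from jnf have pos: "0 \<notin> fst ` set n_as" and sim: "similar_mat A (jordan_matrix n_as)"
    unfolding jordan_nf_def by auto
  from similar_matD[OF sim] A obtain n' where "A \<in> carrier_mat n' n'" "jordan_matrix n_as \<in> carrier_mat n' n'" by auto
  with A have Jc: "jordan_matrix n_as \<in> carrier_mat n n" by auto
  hence sumn: "sum_list (map fst n_as) = n" by auto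
  have blk: "jordan_block na a ^\<^sub>m n = 0\<^sub>m na na" if mem: "(na, a) \<in> set n_as" for na a
  proof -
    have "na > 0" using pos mem by force
    have "poly (char_poly A) a = (\<Prod>x\<leftarrow>n_as. (a - snd x) ^ fst x)"
      unfolding cp2 poly_prod_list by (simp add: o_def case_prod_beta)
    also have "\<dots> = 0" unfolding prod_list_zero_iff
      using mem \<open>na > 0\<close> by (auto intro!: image_eqI[of _ _ "(na,a)"])
    finally have "eigenvalue A a" using eigenvalue_root_char_poly[OF A] by simp
    hence a0: "a = 0" by (rule ev0)
    have "na \<in> set (map fst n_as)" using mem by force
    hence "na \<le> n" using sumn member_le_sum_list[of na "map fst n_as"] by simp
    show ?thesis unfolding a0 jordan_block_zero_pow using \<open>na \<le> n\<close>
      by (intro eq_matI) auto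
  qed
  have J0: "(jordan_matrix n_as) ^\<^sub>m n = 0\<^sub>m n n"
  proof (rule eq_matI)
    fix i j assume ij: "i < dim_row (0\<^sub>m n n :: complex mat)" "j < dim_col (0\<^sub>m n n :: complex mat)"
    have "(jordan_matrix n_as ^\<^sub>m n) $$ (i,j) \<in> elements_mat (jordan_matrix n_as ^\<^sub>m n)"
      using ij Jc sumn unfolding elements_mat_def by (auto intro!: bexI[of _ i])
    also have "\<dots> \<subseteq> {0}"
    proof -
      have "elements_mat B \<subseteq> {0}" if "B \<in> set (map (\<lambda>(n', a). jordan_block n' a ^\<^sub>m n) n_as)" for B
      proof -
        from that obtain na a where "(na,a) \<in> set n_as" "B = jordan_block na a ^\<^sub>m n" by auto
        hence "B = 0\<^sub>m na na" using blk by simp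
        thus ?thesis by (auto simp: elements_mat_def)
      qed
      hence "\<Union> (set (map elements_mat (map (\<lambda>(n', a). jordan_block n' a ^\<^sub>m n) n_as))) \<subseteq> {0}"
        by auto
      thus ?thesis unfolding jordan_matrix_pow
        using elements_diag_block_mat[of "map (\<lambda>(n', a). jordan_block n' a ^\<^sub>m n) n_as"] by blast
    qed
    finally show "(jordan_matrix n_as ^\<^sub>m n) $$ (i,j) = 0\<^sub>m n n $$ (i,j)" using ij by simp
  qed (insert Jc sumn, simp_all add: carrier_matD)
  show ?thesis unfolding pw J0 using PQ by simp
qed



lemma pow_mat_add: assumes "(S :: 'a :: semiring_1 mat) \<in> carrier_mat n n"
  shows "S ^\<^sub>m (a + b) = S ^\<^sub>m a * S ^\<^sub>m b"
proof (induct b)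
  case 0 thus ?case using assms by (simp add: right_mult_one_mat[of _ n n])
next
  case (Suc b)
  have "S ^\<^sub>m (a + Suc b) = (S ^\<^sub>m a * S ^\<^sub>m b) * S" using Suc by simp
  also have "\<dots> = S ^\<^sub>m a * (S ^\<^sub>m b * S)"
    by (rule assoc_mult_mat[of _ n n _ n _ n]) (use assms in auto)
  finally show ?case by simp
qed

lemma pow_mat_sym: assumes S: "(S :: 'a :: comm_semiring_1 mat) \<in> carrier_mat n n" and sym: "transpose_mat S = S"
  shows "transpose_mat (S ^\<^sub>m k) = S ^\<^sub>m k"
proof (induct k)
  case 0 thus ?case using S by simp
next
  case (Suc k)
  have "transpose_mat (S ^\<^sub>m Suc k) = transpose_mat S * transpose_mat (S ^\<^sub>m k)"
    using S by (simp add: transpose_mult[of _ n n _ n])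
  also have "\<dots> = S * S ^\<^sub>m k" using Suc sym S by simp
  also have "\<dots> = S ^\<^sub>m (1 + k)" using pow_mat_add[OF S, of 1 k] S by (simp add: left_mult_one_mat)
  finally show ?case by simp
qed

lemma sym_sq_zero: assumes S: "(S :: real mat) \<in> carrier_mat n n" and sym: "transpose_mat S = S"
  and sq: "S * S = 0\<^sub>m n n"
  shows "S = 0\<^sub>m n n"
proof (rule eq_matI)
  fix i j assume ij: "i < dim_row (0\<^sub>m n n :: real mat)" "j < dim_col (0\<^sub>m n n :: real mat)"
  have symE: "S $$ (k,i) = S $$ (i,k)" if "k < n" for k
    using arg_cong[OF sym, of "\<lambda>M. M $$ (i,k)"] that ij S by auto
  have "0 = (S * S) $$ (i,i)" using sq ij by simp
  also have "\<dots> = (\<Sum>k\<in>{0..<n}. S $$ (i,k) * S $$ (k,i))" using S ij by (simp add: scalar_prod_def)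
  also have "\<dots> = (\<Sum>k\<in>{0..<n}. (S $$ (i,k))^2)" by (rule sum.cong) (auto simp: symE power2_eq_square)
  finally have "(\<Sum>k\<in>{0..<n}. (S $$ (i,k))^2) = 0" by simp
  hence "(S $$ (i,j))^2 = 0" using ij by (subst (asm) sum_nonneg_eq_0_iff) auto
  thus "S $$ (i,j) = 0\<^sub>m n n $$ (i,j)" using ij by simp
qed (use S in auto)

lemma sym_nilpotent_zero: assumes S: "(S :: real mat) \<in> carrier_mat n n" and sym: "transpose_mat S = S"
  shows "k > 0 \<Longrightarrow> S ^\<^sub>m k = 0\<^sub>m n n \<Longrightarrow> S = 0\<^sub>m n n"
proof (induct k rule: less_induct)
  case (less k)
  show ?case
  proof (cases "k = 1")
    case True thus ?thesis using less S by simp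
  next
    case False
    define j where "j = k - 1"
    have j: "j > 0" "j < k" "k \<le> j + j" using less False unfolding j_def by auto
    have "S ^\<^sub>m (j + j) = S ^\<^sub>m k * S ^\<^sub>m (j + j - k)" using pow_mat_add[OF S, of k "j + j - k"] j by simp
    also have "\<dots> = 0\<^sub>m n n" using less S by simp
    finally have "S ^\<^sub>m j * S ^\<^sub>m j = 0\<^sub>m n n" using pow_mat_add[OF S, of j j] by simp
    hence "S ^\<^sub>m j = 0\<^sub>m n n" using sym_sq_zero[of "S ^\<^sub>m j" n] pow_mat_sym[OF S sym] S by simp
    thus ?thesis using less j by blast
  qed
qed


lemma Lf_sym: assumes "p < 8" "q < 8" shows "Lf a b c p q = Lf a b c q p"
  using assms unfolding less8
  by (elim insertE emptyE; simp add: Lf_def nbx_def nby_def nbz_def)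

lemma Lf_rowsum: assumes "p < 8"
  shows "(\<Sum>q\<in>{0..<8}. \<bar>Lf a b c p q + (if p = q then t else 0)\<bar>) = \<bar>a + b + c + t\<bar> + \<bar>a\<bar> + \<bar>b\<bar> + \<bar>c\<bar>"
  using assms unfolding less8 sum8
  by (elim insertE emptyE; simp add: Lf_def nbx_def nby_def nbz_def algebra_simps)

lemma Uf_le_Max: assumes "p < 8"
  shows "\<bar>Uf U p\<bar> \<le> Max {\<bar>U a b c\<bar> | a b c. a \<in> {0,1} \<and> b \<in> {0,1} \<and> c \<in> {0,1}}"
proof -
  have sub: "{\<bar>U a b c\<bar> | a b c. a \<in> {0,1} \<and> b \<in> {0,1} \<and> c \<in> {0,1}}
      \<subseteq> (\<lambda>(a,b,c). \<bar>U a b c\<bar>) ` ({0,1} \<times> {0,1} \<times> {0,1})" by force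
  have fin: "finite {\<bar>U a b c\<bar> | a b c. a \<in> {0,1} \<and> b \<in> {0,1} \<and> c \<in> {0,1}}"
    by (rule finite_subset[OF sub]) simp
  have "p mod 2 \<in> {0,1}" "(p div 2) mod 2 \<in> {0,1}" "p div 4 \<in> {0,1}" using assms by auto
  hence "\<bar>Uf U p\<bar> \<in> {\<bar>U a b c\<bar> | a b c. a \<in> {0,1} \<and> b \<in> {0,1} \<and> c \<in> {0,1}}"
    unfolding Uf_def by (intro CollectI exI[of _ "p mod 2"] exI[of _ "(p div 2) mod 2"] exI[of _ "p div 4"]) simp
  thus ?thesis using fin by (rule Max_ge[rotated])
qed

theorem lemma6:
  fixes hbar m dx dy dz :: real and U :: "nat \<Rightarrow> nat \<Rightarrow> nat \<Rightarrow> real"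
  assumes "hbar > 0" and "m > 0" and "dx > 0" and "dy > 0" and "dz > 0"
  shows "dt_cfl hbar m dx dy dz U \<le> dt_cfl_gen hbar m dx dy dz U"
proof -
  define Mx where "Mx = Max {\<bar>U a b c\<bar> | a b c. a \<in> {0,1} \<and> b \<in> {0,1} \<and> c \<in> {0,1}}"
  define R where "R = (2 * hbar / m) * (1 / dx^2 + 1 / dy^2 + 1 / dz^2) + (1 / hbar) * Mx"
  define B where "B = Ar hbar m dx dy dz U"
  define A where "A = map_mat complex_of_real B"
  define a where "a = hbar/(m*dx^2)"
  define b where "b = hbar/(m*dy^2)"
  define c where "c = hbar/(m*dz^2)"
  have abc: "a > 0" "b > 0" "c > 0" unfolding a_def b_def c_def using assms by auto
  have Beq: "B = mat 8 8 (\<lambda>(p,q). Lf a b c p q + (if p = q then Uf U p / hbar else 0))"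
    unfolding B_def a_def b_def c_def by (rule Ar_eq[OF assms])
  have Bc: "B \<in> carrier_mat 8 8" unfolding Beq by simp
  have Ac: "A \<in> carrier_mat 8 8" unfolding A_def using Bc by simp
  have gen: "dt_cfl_gen hbar m dx dy dz U = 2 / spectral_radius A"
    unfolding dt_cfl_gen_def A_def B_def Ar_def ..
  have cfl: "dt_cfl hbar m dx dy dz U = 2 / R"
    unfolding dt_cfl_def R_def Mx_def ..
  have Mx0: "0 \<le> Mx" using Uf_le_Max[of 0 U] unfolding Mx_def by linarith
  have rows: "(\<Sum>j\<in>{0..<8}. norm (A $$ (i,j))) \<le> R" if i: "i < 8" for i
  proof -
    have "(\<Sum>j\<in>{0..<8}. norm (A $$ (i,j))) = (\<Sum>j\<in>{0..<8}. \<bar>Lf a b c i j + (if i = j then Uf U i / hbar else 0)\<bar>)"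
    proof (rule sum.cong)
      fix j assume "j \<in> {0..<8::nat}"
      hence j: "j < 8" by simp
      have "A $$ (i,j) = complex_of_real (B $$ (i,j))" unfolding A_def using i j Bc by simp
      hence "norm (A $$ (i,j)) = \<bar>B $$ (i,j)\<bar>" by simp
      also have "\<dots> = \<bar>Lf a b c i j + (if i = j then Uf U i / hbar else 0)\<bar>" unfolding Beq using i j by simp
      finally show "norm (A $$ (i,j)) = \<bar>Lf a b c i j + (if i = j then Uf U i / hbar else 0)\<bar>" .
    qed simp
    also have "\<dots> = \<bar>a + b + c + Uf U i / hbar\<bar> + \<bar>a\<bar> + \<bar>b\<bar> + \<bar>c\<bar>" by (rule Lf_rowsum[OF i])
    also have "\<dots> \<le> 2 * (a + b + c) + \<bar>Uf U i\<bar> / hbar"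
      using abc assms by (simp add: abs_triangle_ineq[THEN order_trans] abs_divide)
    also have "\<dots> \<le> 2 * (a + b + c) + Mx / hbar"
      using Uf_le_Max[OF i, of U] assms unfolding Mx_def by (simp add: divide_right_mono)
    also have "\<dots> = R" unfolding R_def a_def b_def c_def using assms by (simp add: field_simps)
    finally show ?thesis .
  qed
  have ev_le: "norm l \<le> R" if "eigenvalue A l" for l
    by (rule gersh[OF Ac that rows]) 
  have rho_le: "spectral_radius A \<le> R"
    using spectral_radius_mem_max(1)[OF Ac] ev_le unfolding spectrum_def by auto
  have rho_pos: "spectral_radius A > 0"
  proof (rule ccontr)
    assume "\<not> spectral_radius A > 0"
    hence r0: "spectral_radius A \<le> 0" by simp
    have "l = 0" if "eigenvalue A l" for l
    proof -
      have "norm l \<in> norm ` spectrum A" using that unfolding spectrum_def by simp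
      hence "norm l \<le> spectral_radius A" using spectral_radius_mem_max(2)[OF Ac] by simp
      hence "norm l \<le> 0" using r0 by linarith
      thus ?thesis by simp
    qed
    hence A8: "A ^\<^sub>m 8 = 0\<^sub>m 8 8" by (rule spec_zero_nilpotent[OF Ac])
    have "map_mat complex_of_real (B ^\<^sub>m 8) = map_mat complex_of_real (0\<^sub>m 8 8)"
    proof -
      have z: "map_mat complex_of_real (0\<^sub>m 8 8) = 0\<^sub>m 8 8" by (intro eq_matI) auto
      have "map_mat complex_of_real (B ^\<^sub>m 8) = A ^\<^sub>m 8" unfolding A_def by (rule of_real_hom.mat_hom_pow[OF Bc])
      thus ?thesis unfolding z A8 .
    qed
    hence B8: "B ^\<^sub>m 8 = 0\<^sub>m 8 8" by (rule of_real_hom.mat_hom_inj)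
    have sym: "transpose_mat B = B"
    proof (rule eq_matI)
      fix i j assume "i < dim_row B" "j < dim_col B"
      hence ij: "i < 8" "j < 8" using Bc by auto
      have "transpose_mat B $$ (i,j) = B $$ (j,i)" using ij Bc by simp
      also have "\<dots> = B $$ (i,j)" unfolding Beq using ij Lf_sym[OF ij(2) ij(1), of a b c] by simp
      finally show "transpose_mat B $$ (i,j) = B $$ (i,j)" .
    qed (use Bc in auto)
    have "B = 0\<^sub>m 8 8" by (rule sym_nilpotent_zero[OF Bc sym, of 8]) (simp_all add: B8)
    hence "B $$ (0,1) = 0" by simp
    moreover have "B $$ (0,1) = - a" unfolding Beq by (simp add: Lf_def nbx_def)
    ultimately show False using abc by simp
  qed
  show ?thesis unfolding gen cfl
  proof (rule divide_left_mono)
    show "spectral_radius A \<le> R" by (rule rho_le)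
    show "0 < R * spectral_radius A" using rho_le rho_pos by simp
  qed simp
qed

end
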